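(* Let $N\ge 2$ and let $G$ be a bulkless graph on boundary vertices $v_1,\ldots,v_N$ which solves the DBRP for some contiguous entropy data $S$ on $N$ cyclically ordered atomic regions. Then there exists a planar weighted graph $H$, containing boundary vertices $v_1,\ldots,v_N$, with $O(N^4)$ vertices and $O(N^4)$ edges, which solves the DBRP for the same data $S$.
   Context: Atomic boundary regions are labelled $1,\ldots,N$ and arranged cyclically in this order. A contiguous region is a nonempty proper subset of $[N]$ of the form $\{a,a+1,\ldots,a+m\}$ (indices mod $N$). Contiguous entropy data is an assignment of a real number $S(R)\ge 0$ to each contiguous region $R$ with $S(R)=S([N]\setminus R)$. A weighted graph solves the DBRP for this data if it is a finite undirected graph with nonnegative real edge weights containing distinguished boundary vertices $v_1,\ldots,v_N$ such that for every contiguous $R$, the min-cut value between $\{v_i:i\in R\}$ and $\{v_j:j\notin R\}$ (the minimum total weight of an edge set whose removal disconnects every vertex of the first set from every vertex of the second) equals $S(R)$. A bulkless graph is a solution whose only vertices are $v_1,\ldots,v_N$ (a complete graph on them with nonnegative weights). *)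

theory Defs
  imports "HOL-Analysis.Analysis"
begin

text \<open>Atomic boundary regions are labelled 1..N, cyclically ordered.
  A contiguous region is a nonempty proper subset of {1..N} of the form
  {a, a+1, ..., a+m} with indices taken mod N.\<close>

definition cyc_region :: "nat \<Rightarrow> nat \<Rightarrow> nat \<Rightarrow> nat set" where
  "cyc_region N a m = {((a - 1 + k) mod N) + 1 | k. k \<le> m}"

definition contiguous :: "nat \<Rightarrow> nat set \<Rightarrow> bool" where
  "contiguous N R \<longleftrightarrow> R \<noteq> {} \<and> R \<subset> {1..N} \<and>
     (\<exists>a\<in>{1..N}. \<exists>m. R = cyc_region N a m)"

definition entropy_data :: "nat \<Rightarrow> (nat set \<Rightarrow> real) \<Rightarrow> bool" where
  "entropy_data N S \<longleftrightarrow>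
     (\<forall>R. contiguous N R \<longrightarrow> S R \<ge> 0 \<and> S R = S ({1..N} - R))"

definition is_graph :: "'v set \<Rightarrow> 'v set set \<Rightarrow> bool" where
  "is_graph V E \<longleftrightarrow> finite V \<and> (\<forall>e\<in>E. \<exists>x y. x \<noteq> y \<and> x \<in> V \<and> y \<in> V \<and> e = {x, y})"

definition connected_in :: "'v set set \<Rightarrow> 'v \<Rightarrow> 'v \<Rightarrow> bool" where
  "connected_in E x y \<longleftrightarrow> (x, y) \<in> {(a, b). {a, b} \<in> E}\<^sup>*"

definition is_cut :: "'v set set \<Rightarrow> 'v set set \<Rightarrow> 'v set \<Rightarrow> 'v set \<Rightarrow> bool" where
  "is_cut E F A B \<longleftrightarrow> F \<subseteq> E \<and> (\<forall>a\<in>A. \<forall>b\<in>B. \<not> connected_in (E - F) a b)"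

definition min_cut :: "'v set set \<Rightarrow> ('v set \<Rightarrow> real) \<Rightarrow> 'v set \<Rightarrow> 'v set \<Rightarrow> real" where
  "min_cut E w A B = Min {sum w F | F. is_cut E F A B}"

definition solves_DBRP ::
  "nat \<Rightarrow> (nat set \<Rightarrow> real) \<Rightarrow> 'v set \<Rightarrow> 'v set set \<Rightarrow> ('v set \<Rightarrow> real) \<Rightarrow> (nat \<Rightarrow> 'v) \<Rightarrow> bool" where
  "solves_DBRP N S V E w v \<longleftrightarrow>
     is_graph V E \<and> (\<forall>e\<in>E. w e \<ge> 0) \<and> v ` {1..N} \<subseteq> V \<and> inj_on v {1..N} \<and>
     (\<forall>R. contiguous N R \<longrightarrow> min_cut E w (v ` R) (v ` ({1..N} - R)) = S R)"

text \<open>Complete graph on the boundary labels 1..N (edge set of a bulkless graph).\<close>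
definition complete_edges :: "nat \<Rightarrow> nat set set" where
  "complete_edges N = {{i, j} | i j. i \<in> {1..N} \<and> j \<in> {1..N} \<and> i \<noteq> j}"

definition planar :: "'v set \<Rightarrow> 'v set set \<Rightarrow> bool" where
  "planar V E \<longleftrightarrow> (\<exists>(p :: 'v \<Rightarrow> complex) (\<gamma> :: 'v set \<Rightarrow> real \<Rightarrow> complex).
     inj_on p V \<and>
     (\<forall>e\<in>E. arc (\<gamma> e) \<and> {pathstart (\<gamma> e), pathfinish (\<gamma> e)} = p ` e \<and>
              path_image (\<gamma> e) \<inter> p ` V = p ` e) \<and>
     (\<forall>e\<in>E. \<forall>e'\<in>E. e \<noteq> e' \<longrightarrow> path_image (\<gamma> e) \<inter> path_image (\<gamma> e') \<subseteq> p ` (e \<inter> e')))"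

end

theory Submission
  imports Defs "HOL-Library.Nat_Bijection"
begin


lemma connected_refl: "connected_in E x x"
  by (simp add: connected_in_def)

lemma connected_edge: "{a,b} \<in> E \<Longrightarrow> connected_in E a b"
  by (auto simp: connected_in_def)

lemma connected_trans: "connected_in E x y \<Longrightarrow> connected_in E y z \<Longrightarrow> connected_in E x z"
  unfolding connected_in_def by (rule rtrancl_trans)

lemma connected_sym: "connected_in E x y \<Longrightarrow> connected_in E y x"
proof -
  have s: "sym {(a, b). {a, b} \<in> E}" by (auto simp: sym_def insert_commute)
  assume "connected_in E x y"
  then show ?thesis unfolding connected_in_def
    by (metis (no_types, lifting) rtrancl_converseD s sym_conv_converse_eq sym_rtrancl)
qed

lemma connected_side:
  assumes "\<And>a b. {a,b} \<in> E \<Longrightarrow> (P a \<longleftrightarrow> P b)"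
    and "connected_in E x y"
  shows "P x = P y"
proof -
  have "(x, y) \<in> {(a, b). {a, b} \<in> E}\<^sup>*" using assms(2) by (simp add: connected_in_def)
  then show ?thesis
    by (induction rule: rtrancl_induct) (use assms(1) in auto)
qed

lemma min_cut_eqI:
  assumes "finite E"
    and "is_cut E F0 A B" and "sum w F0 = x"
    and "\<And>F. is_cut E F A B \<Longrightarrow> x \<le> sum w F"
  shows "min_cut E w A B = x"
  unfolding min_cut_def
proof (rule Min_eqI)
  have "{sum w F | F. is_cut E F A B} \<subseteq> sum w ` Pow E" by (auto simp: is_cut_def)
  then show "finite {sum w F | F. is_cut E F A B}"
    using assms(1) finite_surj by blast
  show "x \<in> {sum w F | F. is_cut E F A B}" using assms(2,3) by blast
  fix y assume "y \<in> {sum w F | F. is_cut E F A B}"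
  then show "x \<le> y" using assms(4) by blast
qed

definition cr :: "nat set \<Rightarrow> nat set \<Rightarrow> bool" where
  "cr R e \<longleftrightarrow> ((Min e \<in> R) \<noteq> (Max e \<in> R))"

definition XS :: "nat \<Rightarrow> (nat set \<Rightarrow> real) \<Rightarrow> nat set \<Rightarrow> real" where
  "XS N c R = sum c {e \<in> complete_edges N. cr R e}"

lemma finite_CE: "finite (complete_edges N)"
proof -
  have "complete_edges N \<subseteq> (\<lambda>(i,j). {i,j}) ` ({1..N} \<times> {1..N})"
    by (auto simp: complete_edges_def)
  then show ?thesis by (meson finite_SigmaI finite_atLeastAtMost finite_imageI finite_subset)
qed

lemma cr_pair: "i \<noteq> j \<Longrightarrow> cr R {i,j} \<longleftrightarrow> ((i \<in> R) \<noteq> (j \<in> R))"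
  by (cases "i < j") (auto simp: cr_def max_def min_def)

lemma CE_min:
  assumes "R \<subseteq> {1..N}" and c: "\<forall>e\<in>complete_edges N. c e \<ge> 0"
  shows "min_cut (complete_edges N) c (id ` R) (id ` ({1..N} - R)) = XS N c R"
proof (rule min_cut_eqI[OF finite_CE])
  let ?F0 = "{e \<in> complete_edges N. cr R e}"
  show "sum c ?F0 = XS N c R" by (simp add: XS_def)
  have "\<not> connected_in (complete_edges N - ?F0) a b" if "a \<in> R" "b \<in> {1..N} - R" for a b
  proof
    assume "connected_in (complete_edges N - ?F0) a b"
    moreover have "(x \<in> R) \<longleftrightarrow> (y \<in> R)" if "{x,y} \<in> complete_edges N - ?F0" for x y
    proof -
      from that obtain i j where ij: "{x,y} = {i,j}" "i \<noteq> j" "\<not> cr R {i,j}"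
        by (auto simp: complete_edges_def)
      then show ?thesis using cr_pair[of i j R] by (auto simp: doubleton_eq_iff)
    qed
    ultimately have "(a \<in> R) = (b \<in> R)" by (rule connected_side[rotated])
    then show False using that by auto
  qed
  then show "is_cut (complete_edges N) ?F0 (id ` R) (id ` ({1..N} - R))"
    by (auto simp: is_cut_def)
  fix F assume F: "is_cut (complete_edges N) F (id ` R) (id ` ({1..N} - R))"
  have "?F0 \<subseteq> F"
  proof
    fix e assume e: "e \<in> ?F0"
    then obtain i j where ij: "e = {i,j}" "i \<in> {1..N}" "j \<in> {1..N}" "i \<noteq> j"
      by (auto simp: complete_edges_def)
    with e have d: "(i \<in> R) \<noteq> (j \<in> R)" using cr_pair by auto
    show "e \<in> F"
    proof (rule ccontr)
      assume "e \<notin> F"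
      then have "e \<in> complete_edges N - F" using e by auto
      then have "{i,j} \<in> complete_edges N - F" "{j,i} \<in> complete_edges N - F" using ij by (auto simp: insert_commute)
      then have "connected_in (complete_edges N - F) i j" "connected_in (complete_edges N - F) j i"
        by (auto intro: connected_edge)
      then show False using F d ij by (auto simp: is_cut_def)
    qed
  qed
  moreover have "finite F" using F finite_CE by (auto simp: is_cut_def intro: finite_subset)
  moreover have "\<forall>e\<in>F. c e \<ge> 0" using F c by (auto simp: is_cut_def)
  ultimately show "XS N c R \<le> sum c F" unfolding XS_def
    by (intro sum_mono2) auto
qed



definition pt :: "nat \<Rightarrow> nat \<Rightarrow> nat" where "pt x y = prod_encode (x, y)"
definition hE :: "nat \<Rightarrow> nat \<Rightarrow> nat set" where "hE x y = {pt x y, pt (Suc x) y}"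
definition vE :: "nat \<Rightarrow> nat \<Rightarrow> nat set" where "vE x y = {pt x y, pt x (Suc y)}"

definition gridV :: "nat \<Rightarrow> nat set" where
  "gridV N = (\<lambda>(x,y). pt x y) ` ({0..2*N} \<times> {0..N})"
definition gridE :: "nat \<Rightarrow> nat set set" where
  "gridE N = (\<lambda>(x,y). hE x y) ` ({0..<2*N} \<times> {0..N}) \<union> (\<lambda>(x,y). vE x y) ` ({0..2*N} \<times> {0..<N})"

definition Pth :: "nat \<Rightarrow> nat \<Rightarrow> nat set set" where
  "Pth i j = (\<lambda>y. vE (2*i) y) ` {..<j-i} \<union> (\<lambda>x. hE x (j-i)) ` {2*i..<2*j} \<union> (\<lambda>y. vE (2*j) y) ` {..<j-i}"

definition wt :: "nat \<Rightarrow> (nat set \<Rightarrow> real) \<Rightarrow> nat set \<Rightarrow> real" where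
  "wt N c g = (\<Sum>e\<in>complete_edges N. c e * (if g \<in> Pth (Min e) (Max e) then 1 else 0))"

definition bv :: "nat \<Rightarrow> nat" where "bv k = pt (2*k) 0"

lemma pt_eq[simp]: "pt x y = pt x' y' \<longleftrightarrow> x = x' \<and> y = y'"
  by (simp add: pt_def)

lemma vert_conn: "(\<And>y. y < h \<Longrightarrow> vE x y \<in> E) \<Longrightarrow> connected_in E (pt x 0) (pt x h)"
proof (induction h)
  case 0 then show ?case by (simp add: connected_refl)
next
  case (Suc h)
  then have "connected_in E (pt x 0) (pt x h)" by auto
  moreover have "connected_in E (pt x h) (pt x (Suc h))"
    using Suc.prems[of h] by (auto simp: vE_def intro: connected_edge)
  ultimately show ?case by (rule connected_trans)
qed

lemma hor_conn: "(\<And>k. k < l \<Longrightarrow> hE (x+k) y \<in> E) \<Longrightarrow> connected_in E (pt x y) (pt (x+l) y)"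
proof (induction l)
  case 0 then show ?case by (simp add: connected_refl)
next
  case (Suc l)
  then have "connected_in E (pt x y) (pt (x+l) y)" by auto
  moreover have "connected_in E (pt (x+l) y) (pt (x + Suc l) y)"
    using Suc.prems[of l] by (auto simp: hE_def intro: connected_edge)
  ultimately show ?case by (rule connected_trans)
qed

lemma Pth_conn:
  assumes "i < j" "Pth i j \<subseteq> E"
  shows "connected_in E (bv i) (bv j)"
proof -
  let ?h = "j - i"
  have 1: "connected_in E (pt (2*i) 0) (pt (2*i) ?h)"
    by (rule vert_conn) (use assms(2) in \<open>auto simp: Pth_def\<close>)
  have 2: "connected_in E (pt (2*j) 0) (pt (2*j) ?h)"
    by (rule vert_conn) (use assms(2) in \<open>auto simp: Pth_def\<close>)
  have "connected_in E (pt (2*i) ?h) (pt (2*i + (2*j - 2*i)) ?h)"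
    by (rule hor_conn) (use assms in \<open>auto simp: Pth_def\<close>)
  then have 3: "connected_in E (pt (2*i) ?h) (pt (2*j) ?h)" using assms(1) by simp
  show ?thesis unfolding bv_def
    using connected_trans[OF connected_trans[OF 1 3] connected_sym[OF 2]] .
qed

lemma Pth_sub:
  assumes "i < j" "j \<le> N"
  shows "Pth i j \<subseteq> gridE N"
  using assms unfolding Pth_def gridE_def
  by (auto 0 3 intro!: image_eqI)

lemma finite_gridE: "finite (gridE N)"
  by (simp add: gridE_def)

lemma sum_wt:
  assumes "finite F"
  shows "sum (wt N c) F = (\<Sum>e\<in>complete_edges N. c e * real (card (F \<inter> Pth (Min e) (Max e))))"
proof -
  have "sum (wt N c) F = (\<Sum>e\<in>complete_edges N. \<Sum>g\<in>F. c e * (if g \<in> Pth (Min e) (Max e) then 1 else 0))"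
    unfolding wt_def by (rule sum.swap)
  also have "\<dots> = (\<Sum>e\<in>complete_edges N. c e * real (card (F \<inter> Pth (Min e) (Max e))))"
  proof (rule sum.cong[OF refl])
    fix e
    have "(\<Sum>g\<in>F. c e * (if g \<in> Pth (Min e) (Max e) then 1 else 0)) =
          c e * (\<Sum>g\<in>F. (if g \<in> Pth (Min e) (Max e) then 1 else 0))"
      by (simp add: sum_distrib_left)
    also have "(\<Sum>g\<in>F. (if g \<in> Pth (Min e) (Max e) then 1 else (0::real))) = real (card (F \<inter> Pth (Min e) (Max e)))"
      using assms by (simp add: sum.If_cases)
    finally show "(\<Sum>g\<in>F. c e * (if g \<in> Pth (Min e) (Max e) then 1 else 0)) = c e * real (card (F \<inter> Pth (Min e) (Max e)))" .
  qed
  finally show ?thesis .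
qed

lemma CE_elem:
  assumes "e \<in> complete_edges N"
  obtains i j where "e = {i,j}" "1 \<le> i" "i < j" "j \<le> N" "Min e = i" "Max e = j"
proof -
  from assms obtain i j where ij: "e = {i,j}" "i \<in> {1..N}" "j \<in> {1..N}" "i \<noteq> j"
    by (auto simp: complete_edges_def)
  show ?thesis
  proof (cases "i < j")
    case True then show ?thesis using that[of i j] ij by auto
  next
    case False then show ?thesis using that[of j i] ij by (auto simp: insert_commute)
  qed
qed

lemma wt_nonneg:
  assumes "\<forall>e\<in>complete_edges N. c e \<ge> 0"
  shows "wt N c g \<ge> 0"
  unfolding wt_def using assms by (intro sum_nonneg) auto

lemma grid_lower:
  assumes R: "R \<subseteq> {1..N}" and c: "\<forall>e\<in>complete_edges N. c e \<ge> 0"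
    and F: "is_cut (gridE N) F (bv ` R) (bv ` ({1..N} - R))"
  shows "XS N c R \<le> sum (wt N c) F"
proof -
  have fF: "finite F" using F finite_gridE by (auto simp: is_cut_def intro: finite_subset)
  have key: "card (F \<inter> Pth (Min e) (Max e)) \<ge> 1" if e: "e \<in> complete_edges N" "cr R e" for e
  proof -
    obtain i j where ij: "e = {i,j}" "1 \<le> i" "i < j" "j \<le> N" "Min e = i" "Max e = j"
      using CE_elem[OF e(1)] by blast
    have ne: "F \<inter> Pth i j \<noteq> {}"
    proof
      assume "F \<inter> Pth i j = {}"
      then have "Pth i j \<subseteq> gridE N - F" using Pth_sub[OF ij(3,4)] by auto
      then have con: "connected_in (gridE N - F) (bv i) (bv j)" using Pth_conn ij(3) by blast
      have "(i \<in> R) \<noteq> (j \<in> R)" using e(2) ij by (simp add: cr_def)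
      then show False using F con connected_sym[OF con] ij by (auto simp: is_cut_def)
    qed
    have "finite (F \<inter> Pth i j)" using fF by auto
    then show ?thesis using ne ij by (simp add: Suc_le_eq card_gt_0_iff)
  qed
  have "XS N c R = (\<Sum>e\<in>complete_edges N. c e * (if cr R e then 1 else 0))"
    unfolding XS_def sum.inter_filter[OF finite_CE] by (rule sum.cong) auto
  also have "\<dots> \<le> (\<Sum>e\<in>complete_edges N. c e * real (card (F \<inter> Pth (Min e) (Max e))))"
  proof (rule sum_mono)
    fix e assume e: "e \<in> complete_edges N"
    show "c e * (if cr R e then 1 else 0) \<le> c e * real (card (F \<inter> Pth (Min e) (Max e)))"
    proof (cases "cr R e")
      case True
      then have "1 \<le> real (card (F \<inter> Pth (Min e) (Max e)))" using key[OF e] by simp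
      moreover have "0 \<le> c e" using c e by auto
      ultimately have "c e * 1 \<le> c e * real (card (F \<inter> Pth (Min e) (Max e)))"
        by (rule mult_left_mono)
      then show ?thesis using True by simp
    next
      case False then show ?thesis using c e by simp
    qed
  qed
  also have "\<dots> = sum (wt N c) F" using sum_wt[OF fF] by simp
  finally show ?thesis .
qed



lemma min_cut_eqI':
  assumes "finite E"
    and "is_cut E F0 A B" and "sum w F0 \<le> x"
    and "\<And>F. is_cut E F A B \<Longrightarrow> x \<le> sum w F"
  shows "min_cut E w A B = x"
proof -
  have "x \<le> sum w F0" using assms(2,4) by blast
  then have "sum w F0 = x" using assms(3) by linarith
  then show ?thesis using min_cut_eqI[OF assms(1,2)] assms(4) by blast
qed

definition sd :: "nat \<Rightarrow> nat \<Rightarrow> nat \<Rightarrow> bool" where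
  "sd a b n = (case prod_decode n of (x, y) \<Rightarrow> 2*a \<le> x \<and> x \<le> 2*b \<and> y \<le> b - a)"

lemma sd_pt[simp]: "sd a b (pt x y) \<longleftrightarrow> 2*a \<le> x \<and> x \<le> 2*b \<and> y \<le> b - a"
  by (simp add: sd_def pt_def)

definition FI :: "nat \<Rightarrow> nat \<Rightarrow> nat \<Rightarrow> nat set set" where
  "FI N a b = {g \<in> gridE N. \<exists>u v. g = {u,v} \<and> sd a b u \<and> \<not> sd a b v}"

lemma vE_FI: "vE x y \<in> FI N a b \<Longrightarrow> 2*a \<le> x \<and> x \<le> 2*b \<and> y = b - a"
  by (auto simp: FI_def vE_def doubleton_eq_iff)

lemma hE_FI: "hE x y \<in> FI N a b \<Longrightarrow> y \<le> b - a \<and> (Suc x = 2*a \<or> x = 2*b)"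
  by (auto simp: FI_def hE_def doubleton_eq_iff)

lemma sd_bv[simp]: "sd a b (bv k) \<longleftrightarrow> a \<le> k \<and> k \<le> b"
  by (simp add: bv_def)

lemma FI_cut:
  assumes R: "R \<subseteq> {1..N}" and "(\<forall>k\<in>{1..N}. (a \<le> k \<and> k \<le> b) = (k \<in> R)) \<or> (\<forall>k\<in>{1..N}. (a \<le> k \<and> k \<le> b) = (k \<notin> R))"
  shows "is_cut (gridE N) (FI N a b) (bv ` R) (bv ` ({1..N} - R))"
  unfolding is_cut_def
proof (intro conjI ballI notI)
  show "FI N a b \<subseteq> gridE N" by (auto simp: FI_def)
  fix u v assume u: "u \<in> bv ` R" and v: "v \<in> bv ` ({1..N} - R)"
    and con: "connected_in (gridE N - FI N a b) u v"
  have "sd a b x = sd a b y" if "{x,y} \<in> gridE N - FI N a b" for x y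
  proof (rule ccontr)
    assume "sd a b x \<noteq> sd a b y"
    then have "{x,y} \<in> FI N a b" using that unfolding FI_def
      by (cases "sd a b x") (auto simp: insert_commute)
    then show False using that by auto
  qed
  from connected_side[of _ "sd a b", OF this con] have eq: "sd a b u = sd a b v" by blast
  from u v obtain k l where "u = bv k" "v = bv l" "k \<in> R" "l \<in> {1..N}" "l \<notin> R"
    by auto
  then have "k \<in> {1..N}" using R by auto
  then show False using eq assms(2) \<open>u = bv k\<close> \<open>v = bv l\<close> \<open>k \<in> R\<close> \<open>l \<in> {1..N}\<close> \<open>l \<notin> R\<close>
    by (metis sd_bv)
qed

lemma FI_card:
  assumes "i < j"
  shows "card (FI N a b \<inter> Pth i j) \<le> (if (a \<le> i \<and> i \<le> b) \<noteq> (a \<le> j \<and> j \<le> b) then 1 else 0)"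
proof -
  let ?h = "j - i"
  define I1 where "I1 = {y. y < ?h \<and> 2*a \<le> 2*i \<and> 2*i \<le> 2*b \<and> y = b - a}"
  define I2 where "I2 = {x. 2*i \<le> x \<and> x < 2*j \<and> ?h \<le> b - a \<and> (Suc x = 2*a \<or> x = 2*b)}"
  define I3 where "I3 = {y. y < ?h \<and> 2*a \<le> 2*j \<and> 2*j \<le> 2*b \<and> y = b - a}"
  have sub: "FI N a b \<inter> Pth i j \<subseteq> (\<lambda>y. vE (2*i) y) ` I1 \<union> (\<lambda>x. hE x ?h) ` I2 \<union> (\<lambda>y. vE (2*j) y) ` I3"
  proof
    fix g assume g: "g \<in> FI N a b \<inter> Pth i j"
    then have gF: "g \<in> FI N a b" by auto
    from g consider (A) y where "y < ?h" "g = vE (2*i) y" | (B) x where "2*i \<le> x" "x < 2*j" "g = hE x ?h"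
      | (C) y where "y < ?h" "g = vE (2*j) y" unfolding Pth_def by auto
    then show "g \<in> (\<lambda>y. vE (2*i) y) ` I1 \<union> (\<lambda>x. hE x ?h) ` I2 \<union> (\<lambda>y. vE (2*j) y) ` I3"
    proof cases
      case A then show ?thesis using vE_FI[of "2*i" y N a b] gF unfolding I1_def by auto
    next
      case B then show ?thesis using hE_FI[of x ?h N a b] gF unfolding I2_def by auto
    next
      case C then show ?thesis using vE_FI[of "2*j" y N a b] gF unfolding I3_def by auto
    qed
  qed
  have c1: "card I1 \<le> (if a \<le> i \<and> i \<le> b \<and> b - a < ?h then 1 else 0)"
  proof -
    have "card I1 \<le> card (if a \<le> i \<and> i \<le> b \<and> b - a < ?h then {b - a} else {})"
      by (rule card_mono) (auto simp: I1_def)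
    moreover have "card (if a \<le> i \<and> i \<le> b \<and> b - a < ?h then {b - a} else {}) = (if a \<le> i \<and> i \<le> b \<and> b - a < ?h then 1 else 0)" by simp
    ultimately show ?thesis by linarith
  qed
  have c3: "card I3 \<le> (if a \<le> j \<and> j \<le> b \<and> b - a < ?h then 1 else 0)"
  proof -
    have "card I3 \<le> card (if a \<le> j \<and> j \<le> b \<and> b - a < ?h then {b - a} else {})"
      by (rule card_mono) (auto simp: I3_def)
    moreover have "card (if a \<le> j \<and> j \<le> b \<and> b - a < ?h then {b - a} else {}) = (if a \<le> j \<and> j \<le> b \<and> b - a < ?h then 1 else 0)" by simp
    ultimately show ?thesis by linarith
  qed
  have c2: "card I2 \<le> (if ?h \<le> b - a \<and> 2*i < 2*a \<and> 2*a \<le> 2*j then 1 else 0)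
                     + (if ?h \<le> b - a \<and> 2*i \<le> 2*b \<and> 2*b < 2*j then 1 else 0)"
  proof -
    define S1 where "S1 = (if ?h \<le> b - a \<and> 2*i < 2*a \<and> 2*a \<le> 2*j then {2*a - 1} else {})"
    define S2 where "S2 = (if ?h \<le> b - a \<and> 2*i \<le> 2*b \<and> 2*b < 2*j then {2*b} else {})"
    have "I2 \<subseteq> S1 \<union> S2" by (auto simp: I2_def S1_def S2_def)
    moreover have "finite (S1 \<union> S2)" by (simp add: S1_def S2_def)
    ultimately have "card I2 \<le> card (S1 \<union> S2)" by (simp add: card_mono)
    also have "\<dots> \<le> card S1 + card S2" by (rule card_Un_le)
    also have "\<dots> = (if ?h \<le> b - a \<and> 2*i < 2*a \<and> 2*a \<le> 2*j then 1 else 0)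
                     + (if ?h \<le> b - a \<and> 2*i \<le> 2*b \<and> 2*b < 2*j then 1 else 0)"
      by (simp add: S1_def S2_def)
    finally show ?thesis .
  qed
  have "card (FI N a b \<inter> Pth i j) \<le> card ((\<lambda>y. vE (2*i) y) ` I1 \<union> (\<lambda>x. hE x ?h) ` I2 \<union> (\<lambda>y. vE (2*j) y) ` I3)"
    by (rule card_mono[OF _ sub]) (simp add: I1_def I2_def I3_def)
  also have "\<dots> \<le> card ((\<lambda>y. vE (2*i) y) ` I1) + card ((\<lambda>x. hE x ?h) ` I2) + card ((\<lambda>y. vE (2*j) y) ` I3)"
    by (meson card_Un_le add_le_mono1 le_trans)
  also have "\<dots> \<le> card I1 + card I2 + card I3"
    by (intro add_mono card_image_le) (auto simp: I1_def I2_def I3_def)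
  also have "\<dots> \<le> (if (a \<le> i \<and> i \<le> b) \<noteq> (a \<le> j \<and> j \<le> b) then 1 else 0)"
    using c1 c2 c3 assms by (auto split: if_splits)
  finally show ?thesis .
qed



lemma grid_min:
  assumes ab: "R \<subseteq> {1..N}" "(\<forall>k\<in>{1..N}. (a \<le> k \<and> k \<le> b) = (k \<in> R)) \<or> (\<forall>k\<in>{1..N}. (a \<le> k \<and> k \<le> b) = (k \<notin> R))"
    and c: "\<forall>e\<in>complete_edges N. c e \<ge> 0"
  shows "min_cut (gridE N) (wt N c) (bv ` R) (bv ` ({1..N} - R)) = XS N c R"
proof (rule min_cut_eqI'[OF finite_gridE FI_cut[OF ab]])
  show "\<And>F. is_cut (gridE N) F (bv ` R) (bv ` ({1..N} - R)) \<Longrightarrow> XS N c R \<le> sum (wt N c) F"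
    using grid_lower[OF ab(1) c] by blast
  have fin: "finite (FI N a b)" using finite_gridE by (auto simp: FI_def)
  have "sum (wt N c) (FI N a b) = (\<Sum>e\<in>complete_edges N. c e * real (card (FI N a b \<inter> Pth (Min e) (Max e))))"
    by (rule sum_wt[OF fin])
  also have "\<dots> \<le> (\<Sum>e\<in>complete_edges N. c e * (if cr R e then 1 else 0))"
  proof (rule sum_mono)
    fix e assume e: "e \<in> complete_edges N"
    obtain i j where ij: "e = {i,j}" "1 \<le> i" "i < j" "j \<le> N" "Min e = i" "Max e = j"
      using CE_elem[OF e] by blast
    have "card (FI N a b \<inter> Pth i j) \<le> (if (a \<le> i \<and> i \<le> b) \<noteq> (a \<le> j \<and> j \<le> b) then 1 else 0)"
      by (rule FI_card[OF ij(3)])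
    moreover have "cr R e \<longleftrightarrow> (a \<le> i \<and> i \<le> b) \<noteq> (a \<le> j \<and> j \<le> b)"
      using ab(2) ij by (auto simp: cr_def)
    ultimately have "real (card (FI N a b \<inter> Pth (Min e) (Max e))) \<le> (if cr R e then 1 else 0)"
      using ij by (auto split: if_splits)
    then show "c e * real (card (FI N a b \<inter> Pth (Min e) (Max e))) \<le> c e * (if cr R e then 1 else 0)"
      using c e by (intro mult_left_mono) auto
  qed
  also have "\<dots> = XS N c R"
    unfolding XS_def sum.inter_filter[OF finite_CE] by (rule sum.cong) auto
  finally show "sum (wt N c) (FI N a b) \<le> XS N c R" .
qed

lemma hmod: assumes "1 \<le> t" "t \<le> (N::nat)" shows "(N + t - Suc 0) mod N = t - Suc 0"
proof -
  have e: "N + t - Suc 0 = (t - Suc 0) + N" using assms by simp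
  have "(N + t - Suc 0) mod N = ((t - Suc 0) + N) mod N" by (simp only: e)
  also have "\<dots> = (t - Suc 0) mod N" by (rule mod_add_self2)
  also have "\<dots> = t - Suc 0" using assms by simp
  finally show ?thesis .
qed

lemma contiguous_interval:
  assumes "contiguous N R"
  shows "\<exists>a b. 1 \<le> a \<and> a \<le> b \<and> b \<le> N \<and> (R = {a..b} \<or> R = {1..N} - {a..b})"
proof -
  have prp: "R \<subset> {1..N}" using assms by (simp add: contiguous_def)
  from assms obtain a m where a: "1 \<le> a" "a \<le> N" and R: "R = cyc_region N a m"
    unfolding contiguous_def by force
  have N: "N \<ge> 1" using a by auto
  show ?thesis
  proof (cases "a + m \<le> N")
    case True
    have "R = {a..a+m}"
    proof
      show "R \<subseteq> {a..a+m}"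
      proof
        fix t assume "t \<in> R"
        then obtain k where k: "k \<le> m" "t = (a - 1 + k) mod N + 1" using R by (auto simp: cyc_region_def)
        then have "a - 1 + k < N" using True a by linarith
        then show "t \<in> {a..a+m}" using k a by simp
      qed
      show "{a..a+m} \<subseteq> R"
      proof
        fix t assume t: "t \<in> {a..a+m}"
        define k where "k = t - a"
        have "k \<le> m" "a - 1 + k < N" using t True a by (auto simp: k_def)
        then have "t = (a - 1 + k) mod N + 1" using t a by (auto simp: k_def)
        then show "t \<in> R" using R \<open>k \<le> m\<close> by (auto simp: cyc_region_def)
      qed
    qed
    then show ?thesis using True a by (intro exI[of _ a] exI[of _ "a+m"]) auto
  next
    case False
    show ?thesis
    proof (cases "N \<le> m + 1")
      case True
      have "{1..N} \<subseteq> R"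
      proof
        fix t assume t: "t \<in> {1..N}"
        define k where "k = (if a \<le> t then t - a else N + t - a)"
        have "k \<le> m" using t True a by (auto simp: k_def)
        moreover have "t = (a - 1 + k) mod N + 1"
        proof (cases "a \<le> t")
          case True then show ?thesis using t a by (simp add: k_def)
        next
          case False
          then have "a - 1 + k = N + (t - 1)" using t a by (simp add: k_def)
          then have "(a - 1 + k) mod N = t - 1" using t hmod[of t N] by simp
          then show ?thesis using t by simp
        qed
        ultimately show "t \<in> R" using R by (auto simp: cyc_region_def)
      qed
      then show ?thesis using prp by auto
    next
      case False
      note False2 = this
      have "R = {1..N} - {a+m+1-N..a-1}"
      proof
        show "R \<subseteq> {1..N} - {a+m+1-N..a-1}"
        proof
          fix t assume "t \<in> R"
          then obtain k where k: "k \<le> m" "t = (a - 1 + k) mod N + 1" using R by (auto simp: cyc_region_def)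
          show "t \<in> {1..N} - {a+m+1-N..a-1}"
          proof (cases "a - 1 + k < N")
            case True then show ?thesis using k a by auto
          next
            case False
            then have "(a - 1 + k) mod N = a - 1 + k - N" using k a False2
              by (simp add: le_mod_geq)
            then show ?thesis using k a False False2 by auto
          qed
        qed
        show "{1..N} - {a+m+1-N..a-1} \<subseteq> R"
        proof
          fix t assume t: "t \<in> {1..N} - {a+m+1-N..a-1}"
          show "t \<in> R"
          proof (cases "a \<le> t")
            case True
            define k where "k = t - a"
            have "k \<le> m" "a - 1 + k < N" using t True a \<open>\<not> a + m \<le> N\<close> by (auto simp: k_def)
            then have "t = (a - 1 + k) mod N + 1" using t a True by (auto simp: k_def)
            then show "t \<in> R" using R \<open>k \<le> m\<close> by (auto simp: cyc_region_def)
          next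
            case False
            define k where "k = N + t - a"
            have "k \<le> m" using t False a by (auto simp: k_def)
            have "a - 1 + k = N + (t - 1)" using t a False by (simp add: k_def)
            then have "(a - 1 + k) mod N = t - 1" using t hmod[of t N] by simp
            then have "t = (a - 1 + k) mod N + 1" using t by simp
            then show "t \<in> R" using R \<open>k \<le> m\<close> by (auto simp: cyc_region_def)
          qed
        qed
      qed
      then show ?thesis using \<open>\<not> a + m \<le> N\<close> False2 a
        by (intro exI[of _ "a+m+1-N"] exI[of _ "a-1"]) auto
    qed
  qed
qed



definition pp :: "nat \<Rightarrow> complex" where
  "pp n = Complex (real (fst (prod_decode n))) (real (snd (prod_decode n)))"

definition gam :: "nat set \<Rightarrow> real \<Rightarrow> complex" where
  "gam e = linepath (pp (Min e)) (pp (Max e))"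

lemma pp_pt[simp]: "pp (pt x y) = Complex (real x) (real y)"
  by (simp add: pp_def pt_def)

lemma inj_pp: "inj pp"
proof (rule injI)
  fix m n assume "pp m = pp n"
  then have "prod_decode m = prod_decode n"
    by (simp add: pp_def complex_eq_iff prod_eq_iff)
  then show "m = n" by (metis prod_decode_inverse)
qed

lemma pp_lattice: "\<exists>a b. pp n = Complex (real a) (real b)"
  by (simp add: pp_def)

lemma gam_pair:
  assumes "u \<noteq> v"
  shows "path_image (gam {u,v}) = closed_segment (pp u) (pp v)"
    "{pathstart (gam {u,v}), pathfinish (gam {u,v})} = {pp u, pp v}"
    "arc (gam {u,v})"
proof -
  have mm: "(Min {u,v} = u \<and> Max {u,v} = v) \<or> (Min {u,v} = v \<and> Max {u,v} = u)"
    by (cases "u \<le> v") (auto simp: min_def max_def)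
  show "path_image (gam {u,v}) = closed_segment (pp u) (pp v)"
    using mm by (auto simp: gam_def closed_segment_commute)
  show "{pathstart (gam {u,v}), pathfinish (gam {u,v})} = {pp u, pp v}"
    using mm by (auto simp: gam_def)
  have ne: "pp u \<noteq> pp v" using assms inj_pp by (auto dest: injD)
  have "gam {u,v} = linepath (pp u) (pp v) \<or> gam {u,v} = linepath (pp v) (pp u)"
    using mm unfolding gam_def by metis
  then show "arc (gam {u,v})"
    using arc_linepath[OF ne] arc_linepath[OF ne[symmetric]] by metis
qed

lemma hE_ne: "pt x y \<noteq> pt (Suc x) y" by simp
lemma vE_ne: "pt x y \<noteq> pt x (Suc y)" by simp

lemma segH: "path_image (gam (hE x y)) = {z. Im z = real y \<and> real x \<le> Re z \<and> Re z \<le> real x + 1}"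
proof -
  have "path_image (gam (hE x y)) = closed_segment (Complex (real x) (real y)) (Complex (real (Suc x)) (real y))"
    unfolding hE_def by (simp only: gam_pair(1)[OF hE_ne] pp_pt)
  also have "\<dots> = {z. Im z = real y \<and> Re z \<in> closed_segment (real x) (real (Suc x))}"
    by (subst closed_segment_same_Im) simp_all
  also have "closed_segment (real x) (real (Suc x)) = {real x..real x + 1}"
    by (simp add: closed_segment_eq_real_ivl)
  finally show ?thesis by auto
qed

lemma segV: "path_image (gam (vE x y)) = {z. Re z = real x \<and> real y \<le> Im z \<and> Im z \<le> real y + 1}"
proof -
  have "path_image (gam (vE x y)) = closed_segment (Complex (real x) (real y)) (Complex (real x) (real (Suc y)))"
    unfolding vE_def by (simp only: gam_pair(1)[OF vE_ne] pp_pt)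
  also have "\<dots> = {z. Re z = real x \<and> Im z \<in> closed_segment (real y) (real (Suc y))}"
    by (subst closed_segment_same_Re) simp_all
  also have "closed_segment (real y) (real (Suc y)) = {real y..real y + 1}"
    by (simp add: closed_segment_eq_real_ivl)
  finally show ?thesis by auto
qed

lemma gridE_cases:
  assumes "g \<in> gridE N"
  obtains x y where "g = hE x y" | x y where "g = vE x y"
  using assms unfolding gridE_def by auto

lemma L1:
  assumes "g \<in> gridE N" "Complex (real a) (real b) \<in> path_image (gam g)"
  shows "Complex (real a) (real b) \<in> pp ` g"
  using assms(1)
proof (cases rule: gridE_cases)
  case (1 x y)
  then have "b = y" "x \<le> a" "a \<le> x + 1" using assms(2) segH by auto
  then have "a = x \<or> a = Suc x" by auto
  then show ?thesis using 1 \<open>b = y\<close> unfolding hE_def by (auto intro: image_eqI[of _ _ "pt x y"] image_eqI[of _ _ "pt (Suc x) y"])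
next
  case (2 x y)
  then have "a = x" "y \<le> b" "b \<le> y + 1" using assms(2) segV by auto
  then have "b = y \<or> b = Suc y" by auto
  then show ?thesis using 2 \<open>a = x\<close> unfolding vE_def by (auto intro: image_eqI[of _ _ "pt x y"] image_eqI[of _ _ "pt x (Suc y)"])
qed

lemma nat_between:
  fixes r :: real
  assumes "real x \<le> r" "r \<le> real x + 1" "real x' \<le> r" "r \<le> real x' + 1" "x \<noteq> x'"
  shows "\<exists>k::nat. r = real k"
proof (cases "x < x'")
  case True
  then have "real x + 1 \<le> real x'" by simp
  then have "r = real x'" using assms by linarith
  then show ?thesis by blast
next
  case False
  then have "real x' + 1 \<le> real x" using assms(5) by simp
  then have "r = real x" using assms by linarith
  then show ?thesis by blast
qed

lemma L2:
  assumes "g \<in> gridE N" "g' \<in> gridE N" "g \<noteq> g'"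
    and z: "z \<in> path_image (gam g)" "z \<in> path_image (gam g')"
  shows "\<exists>a b::nat. z = Complex (real a) (real b)"
proof -
  have zz: "z = Complex (Re z) (Im z)" by simp
  have "(\<exists>a::nat. Re z = real a) \<and> (\<exists>b::nat. Im z = real b)"
    using assms(1)
  proof (cases rule: gridE_cases)
    case (1 x y)
    note g = 1
    show ?thesis using assms(2)
    proof (cases rule: gridE_cases)
      case (1 x' y')
      have "Im z = real y" "Im z = real y'" using z g 1 segH by auto
      then have "y = y'" by simp
      then have "x \<noteq> x'" using assms(3) g 1 by auto
      moreover have "real x \<le> Re z" "Re z \<le> real x + 1" using z(1) g segH by auto
      moreover have "real x' \<le> Re z" "Re z \<le> real x' + 1" using z(2) 1 segH by auto
      ultimately show ?thesis using \<open>Im z = real y\<close> nat_between[of x "Re z" x'] by blast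
    next
      case (2 x' y')
      have "Im z = real y" using z(1) g segH by auto
      moreover have "Re z = real x'" using z(2) 2 segV by auto
      ultimately show ?thesis by blast
    qed
  next
    case (2 x y)
    note g = 2
    show ?thesis using assms(2)
    proof (cases rule: gridE_cases)
      case (1 x' y')
      have "Re z = real x" using z(1) g segV by auto
      moreover have "Im z = real y'" using z(2) 1 segH by auto
      ultimately show ?thesis by blast
    next
      case (2 x' y')
      have "Re z = real x" "Re z = real x'" using z g 2 segV by auto
      then have "x = x'" by simp
      then have "y \<noteq> y'" using assms(3) g 2 by auto
      moreover have "real y \<le> Im z" "Im z \<le> real y + 1" using z(1) g segV by auto
      moreover have "real y' \<le> Im z" "Im z \<le> real y' + 1" using z(2) 2 segV by auto
      ultimately show ?thesis using \<open>Re z = real x\<close> nat_between[of y "Im z" y'] by blast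
    qed
  qed
  then obtain a b :: nat where "Re z = real a" "Im z = real b" by blast
  then show ?thesis by (intro exI[of _ a] exI[of _ b]) (simp add: complex_eq_iff)
qed

lemma pt_gridV: "x \<le> 2*N \<Longrightarrow> y \<le> N \<Longrightarrow> pt x y \<in> gridV N"
  unfolding gridV_def by (rule image_eqI[of _ _ "(x,y)"]) auto

lemma gridE_sub: "g \<in> gridE N \<Longrightarrow> g \<subseteq> gridV N"
  unfolding gridE_def hE_def vE_def by (auto intro!: pt_gridV)

lemma gridE_pair: "g \<in> gridE N \<Longrightarrow> \<exists>u v. u \<noteq> v \<and> g = {u,v}"
  apply (erule gridE_cases) using hE_ne vE_ne unfolding hE_def vE_def by blast+

lemma grid_planar: "planar (gridV N) (gridE N)"
proof -
  have A: "inj_on pp (gridV N)" by (rule inj_on_subset[OF inj_pp]) simp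
  have B: "arc (gam e) \<and> {pathstart (gam e), pathfinish (gam e)} = pp ` e \<and>
              path_image (gam e) \<inter> pp ` gridV N = pp ` e" if e: "e \<in> gridE N" for e
  proof (intro conjI)
    obtain u v where uv: "u \<noteq> v" "e = {u,v}" using gridE_pair[OF e] by blast
    show "arc (gam e)" using gam_pair(3)[OF uv(1)] uv by simp
    show "{pathstart (gam e), pathfinish (gam e)} = pp ` e" using gam_pair(2)[OF uv(1)] uv by simp
    show "path_image (gam e) \<inter> pp ` gridV N = pp ` e"
    proof
      show "path_image (gam e) \<inter> pp ` gridV N \<subseteq> pp ` e"
      proof
        fix z assume z: "z \<in> path_image (gam e) \<inter> pp ` gridV N"
        then obtain n where n: "z = pp n" by auto
        obtain a b :: nat where ab: "pp n = Complex (real a) (real b)" using pp_lattice by blast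
        have "Complex (real a) (real b) \<in> path_image (gam e)" using z n ab by simp
        from L1[OF e this] show "z \<in> pp ` e" using n ab by simp
      qed
      have "pp u \<in> closed_segment (pp u) (pp v)" "pp v \<in> closed_segment (pp u) (pp v)"
        by (rule ends_in_segment)+
      then have "pp ` e \<subseteq> path_image (gam e)" unfolding uv(2) gam_pair(1)[OF uv(1)] by simp
      moreover have "pp ` e \<subseteq> pp ` gridV N" using gridE_sub[OF e] by (rule image_mono)
      ultimately show "pp ` e \<subseteq> path_image (gam e) \<inter> pp ` gridV N" by blast
    qed
  qed
  have C: "path_image (gam e) \<inter> path_image (gam e') \<subseteq> pp ` (e \<inter> e')"
    if e: "e \<in> gridE N" and e': "e' \<in> gridE N" and ne: "e \<noteq> e'" for e e'
  proof
    fix z assume z: "z \<in> path_image (gam e) \<inter> path_image (gam e')"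
    then obtain a b :: nat where ab: "z = Complex (real a) (real b)" using L2[OF e e' ne] by blast
    have "z \<in> pp ` e" using L1[OF e] z ab by simp
    moreover have "z \<in> pp ` e'" using L1[OF e'] z ab by simp
    ultimately obtain u u' where uu: "u \<in> e" "u' \<in> e'" "z = pp u" "z = pp u'" by blast
    then have "u = u'" using inj_pp by (metis injD)
    with uu show "z \<in> pp ` (e \<inter> e')" by blast
  qed
  have B': "\<forall>e\<in>gridE N. arc (gam e) \<and> {pathstart (gam e), pathfinish (gam e)} = pp ` e \<and>
              path_image (gam e) \<inter> pp ` gridV N = pp ` e"
  proof
    fix e assume "e \<in> gridE N"
    then show "arc (gam e) \<and> {pathstart (gam e), pathfinish (gam e)} = pp ` e \<and>
              path_image (gam e) \<inter> pp ` gridV N = pp ` e" by (rule B)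
  qed
  have C': "\<forall>e\<in>gridE N. \<forall>e'\<in>gridE N. e \<noteq> e' \<longrightarrow> path_image (gam e) \<inter> path_image (gam e') \<subseteq> pp ` (e \<inter> e')"
  proof (intro ballI impI)
    fix e e' assume "e \<in> gridE N" "e' \<in> gridE N" "e \<noteq> e'"
    then show "path_image (gam e) \<inter> path_image (gam e') \<subseteq> pp ` (e \<inter> e')" by (rule C)
  qed
  show ?thesis unfolding planar_def
    apply (rule exI[of _ pp])
    apply (rule exI[of _ gam])
    using A B' C' by (intro conjI)
qed



lemma card_gridV: "card (gridV N) \<le> (2*N+1)*(N+1)"
proof -
  have "card (gridV N) \<le> card ({0..2*N} \<times> {0..N})" unfolding gridV_def by (rule card_image_le) simp
  also have "\<dots> = (2*N+1)*(N+1)" by (simp add: card_cartesian_product)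
  finally show ?thesis .
qed

lemma card_gridE: "card (gridE N) \<le> 2*N*(N+1) + (2*N+1)*N"
proof -
  have "card (gridE N) \<le> card ((\<lambda>(x,y). hE x y) ` ({0..<2*N} \<times> {0..N})) + card ((\<lambda>(x,y). vE x y) ` ({0..2*N} \<times> {0..<N}))"
    unfolding gridE_def by (rule card_Un_le)
  also have "\<dots> \<le> card ({0..<2*N} \<times> {0..N}) + card ({0..2*N} \<times> {0..<N})"
    by (intro add_mono card_image_le) auto
  also have "\<dots> = 2*N*(N+1) + (2*N+1)*N" by (simp add: card_cartesian_product)
  finally show ?thesis .
qed

lemma poly_bound:
  assumes "N \<ge> (2::nat)"
  shows "(2*N+1)*(N+1) \<le> 10 * N^4" "2*N*(N+1) + (2*N+1)*N \<le> 10 * N^4"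
proof -
  have "N*N \<le> N^4"
  proof -
    have "1 \<le> N*N" using assms by simp
    then have "1 * (N*N) \<le> (N*N)*(N*N)" by (intro mult_right_mono) auto
    then show ?thesis by (simp add: power4_eq_xxxx mult.assoc)
  qed
  moreover have "2*N \<le> N*N" using assms by (intro mult_right_mono) auto
  moreover have "(2*N+1)*(N+1) = 2*(N*N) + 3*N + 1" "2*N*(N+1) + (2*N+1)*N = 4*(N*N) + 3*N"
    by (simp_all add: algebra_simps)
  ultimately have "(2*N+1)*(N+1) \<le> 6*(N*N)" "2*N*(N+1) + (2*N+1)*N \<le> 6*(N*N)"
    using assms by linarith+
  with \<open>N*N \<le> N^4\<close> show "(2*N+1)*(N+1) \<le> 10 * N^4" "2*N*(N+1) + (2*N+1)*N \<le> 10 * N^4" by linarith+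
qed

theorem lemma2:
  shows "\<exists>C::real. \<forall>N::nat. \<forall>S c. N \<ge> 2 \<and> entropy_data N S \<and>
      solves_DBRP N S {1..N} (complete_edges N) c id \<longrightarrow>
      (\<exists>(V :: nat set) (E :: nat set set) (w :: nat set \<Rightarrow> real) (v :: nat \<Rightarrow> nat).
         solves_DBRP N S V E w v \<and> planar V E \<and>
         real (card V) \<le> C * real N ^ 4 \<and> real (card E) \<le> C * real N ^ 4)"
proof (intro exI[of _ 10] allI impI)
  fix N :: nat and S c
  assume H: "N \<ge> 2 \<and> entropy_data N S \<and> solves_DBRP N S {1..N} (complete_edges N) c id"
  then have N: "N \<ge> 2" and sol: "solves_DBRP N S {1..N} (complete_edges N) c id" by auto
  have c: "\<forall>e\<in>complete_edges N. c e \<ge> 0" using sol by (simp add: solves_DBRP_def)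
  have SX: "S R = XS N c R" if R: "contiguous N R" for R
  proof -
    have sub: "R \<subseteq> {1..N}" using R by (auto simp: contiguous_def)
    have "min_cut (complete_edges N) c (id ` R) (id ` ({1..N} - R)) = S R"
      using sol R by (simp add: solves_DBRP_def)
    then show ?thesis using CE_min[OF sub c] by simp
  qed
  have sol2: "solves_DBRP N S (gridV N) (gridE N) (wt N c) bv"
    unfolding solves_DBRP_def
  proof (intro conjI allI impI ballI)
    show "is_graph (gridV N) (gridE N)"
      unfolding is_graph_def
    proof (intro conjI ballI)
      show "finite (gridV N)" by (simp add: gridV_def)
      fix e assume e: "e \<in> gridE N"
      then show "\<exists>x y. x \<noteq> y \<and> x \<in> gridV N \<and> y \<in> gridV N \<and> e = {x, y}"
        using gridE_pair[OF e] gridE_sub[OF e] by blast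
    qed
    show "\<And>e. e \<in> gridE N \<Longrightarrow> 0 \<le> wt N c e" using wt_nonneg[OF c] by blast
    show "bv ` {1..N} \<subseteq> gridV N" by (auto simp: bv_def intro!: pt_gridV)
    show "inj_on bv {1..N}" by (auto simp: inj_on_def bv_def)
    fix R assume R: "contiguous N R"
    have sub: "R \<subseteq> {1..N}" using R by (auto simp: contiguous_def)
    obtain a b where ab: "1 \<le> a" "a \<le> b" "b \<le> N" "R = {a..b} \<or> R = {1..N} - {a..b}"
      using contiguous_interval[OF R] by blast
    have "(\<forall>k\<in>{1..N}. (a \<le> k \<and> k \<le> b) = (k \<in> R)) \<or> (\<forall>k\<in>{1..N}. (a \<le> k \<and> k \<le> b) = (k \<notin> R))"
      using ab(4) by auto
    from grid_min[OF sub this c] SX[OF R]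
    show "min_cut (gridE N) (wt N c) (bv ` R) (bv ` ({1..N} - R)) = S R" by simp
  qed
  have cV: "real (card (gridV N)) \<le> 10 * real N ^ 4"
  proof -
    have "card (gridV N) \<le> 10 * N^4" using card_gridV poly_bound(1)[OF N] le_trans by blast
    then show ?thesis by (metis of_nat_le_iff of_nat_mult of_nat_numeral of_nat_power)
  qed
  have cE: "real (card (gridE N)) \<le> 10 * real N ^ 4"
  proof -
    have "card (gridE N) \<le> 10 * N^4" using card_gridE poly_bound(2)[OF N] le_trans by blast
    then show ?thesis by (metis of_nat_le_iff of_nat_mult of_nat_numeral of_nat_power)
  qed
  show "\<exists>(V :: nat set) (E :: nat set set) (w :: nat set \<Rightarrow> real) (v :: nat \<Rightarrow> nat).
         solves_DBRP N S V E w v \<and> planar V E \<and>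
         real (card V) \<le> 10 * real N ^ 4 \<and> real (card E) \<le> 10 * real N ^ 4"
    using sol2 grid_planar cV cE by blast
qed


end
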